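(* Let $n_1,n_2$ be positive integers, ${\bf P}_c=(p_{c1},\dots,p_{ck})$, $c=1,2$, probability vectors, and let $X_{1i},X_{2i}$, $1\le i\le k$, be mutually independent Poisson random variables with means $\lambda_{1i}=n_1p_{1i}$ and $\lambda_{2i}=n_2p_{2i}$ respectively. Define, with $\xi_i=p_{1i}-p_{2i}$, $$f_i(x_1,x_2)=f^*(x_1,x_2)-\xi_i^2-2\xi_i\left(\frac{x_1}{n_1}-\frac{x_2}{n_2}\right)+2\xi_i^2 .$$ Then: (1) $E f_i(X_{1i},X_{2i})=0$ for each $i$; (2) $\mathrm{Cov}\left(\sum_{i=1}^k f_i(X_{1i},X_{2i}),\sum_{i=1}^kX_{ci}\right)=0$ for $c=1,2$; (3) $\mathrm{Var}\left(\sum_{i=1}^k f_i(X_{1i},X_{2i})\right)=\sum_{i=1}^k\mathrm{Var}(f_i(X_{1i},X_{2i}))=2\sum_{i=1}^k\left(\frac{p_{1i}}{n_1}+\frac{p_{2i}}{n_2}\right)^2.$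
   Context: $f^*(x_1,x_2)=\left(\frac{x_1}{n_1}-\frac{x_2}{n_2}\right)^2-\frac{x_1}{n_1^2}-\frac{x_2}{n_2^2}$. *)

theory Defs
  imports "HOL-Probability.Probability"
begin

text \<open>A nat-valued random variable X on M is Poisson with mean lam (lam \<ge> 0; lam = 0 allowed,
  giving the point mass at 0, since 0^0 = 1).\<close>
definition poisson_rv :: "'a measure \<Rightarrow> ('a \<Rightarrow> nat) \<Rightarrow> real \<Rightarrow> bool" where
  "poisson_rv M X lam \<longleftrightarrow> X \<in> measurable M (count_space UNIV) \<and>
     (\<forall>j::nat. measure M {\<omega> \<in> space M. X \<omega> = j} = lam ^ j / fact j * exp (- lam))"

definition covariance :: "'a measure \<Rightarrow> ('a \<Rightarrow> real) \<Rightarrow> ('a \<Rightarrow> real) \<Rightarrow> real" where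
  "covariance M X Y = integral\<^sup>L M (\<lambda>\<omega>. (X \<omega> - integral\<^sup>L M X) * (Y \<omega> - integral\<^sup>L M Y))"

definition fstar :: "nat \<Rightarrow> nat \<Rightarrow> real \<Rightarrow> real \<Rightarrow> real" where
  "fstar n1 n2 x1 x2 = (x1 / real n1 - x2 / real n2)^2 - x1 / (real n1)^2 - x2 / (real n2)^2"

definition fi :: "nat \<Rightarrow> nat \<Rightarrow> real \<Rightarrow> real \<Rightarrow> real \<Rightarrow> real" where
  "fi n1 n2 \<xi> x1 x2 = fstar n1 n2 x1 x2 - \<xi>^2 - 2 * \<xi> * (x1 / real n1 - x2 / real n2) + 2 * \<xi>^2"

end

theory Submission
  imports Defs
begin

definition pq :: "real \<Rightarrow> nat \<Rightarrow> real" where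
  "pq lam j = lam ^ j / fact j * exp (- lam)"

lemma poisson_integral:
  fixes h :: "nat \<Rightarrow> real"
  assumes P: "prob_space M" and X: "poisson_rv M X lam" and lam: "lam \<ge> 0"
    and S: "summable (\<lambda>j. norm (pq lam j * h j))"
  shows "integrable M (\<lambda>\<omega>. h (X \<omega>))" "(\<integral>\<omega>. h (X \<omega>) \<partial>M) = (\<Sum>j. pq lam j * h j)"
proof -
  interpret prob_space M by (rule P)
  have Xm[measurable]: "X \<in> measurable M (count_space UNIV)" using X by (simp add: poisson_rv_def)
  have nn: "\<And>j. pq lam j \<ge> 0" using lam by (simp add: pq_def)
  have N: "distr M (count_space UNIV) X = density (count_space UNIV) (\<lambda>j. ennreal (pq lam j))"
  proof (rule measure_eqI_countable[where A=UNIV])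
    fix a :: nat
    have "emeasure (distr M (count_space UNIV) X) {a} = emeasure M (X -` {a} \<inter> space M)"
      by (simp add: emeasure_distr)
    also have "\<dots> = ennreal (measure M {\<omega> \<in> space M. X \<omega> = a})"
      by (simp add: emeasure_eq_measure vimage_def Int_def conj_commute)
    also have "\<dots> = ennreal (pq lam a)" using X by (simp add: poisson_rv_def pq_def)
    also have "\<dots> = emeasure (density (count_space UNIV) (\<lambda>j. ennreal (pq lam j))) {a}"
      by (simp add: emeasure_density)
    finally show "emeasure (distr M (count_space UNIV) X) {a} = emeasure (density (count_space UNIV) (\<lambda>j. ennreal (pq lam j))) {a}" .
  qed auto
  have I: "integrable (count_space UNIV) (\<lambda>j. pq lam j * h j)"
    using S by (simp add: integrable_count_space_nat_iff)
  have "integrable (distr M (count_space UNIV) X) h"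
    unfolding N using I nn by (subst integrable_density) auto
  then show "integrable M (\<lambda>\<omega>. h (X \<omega>))" by (subst (asm) integrable_distr_eq) auto
  have "(\<integral>\<omega>. h (X \<omega>) \<partial>M) = integral\<^sup>L (distr M (count_space UNIV) X) h"
    by (simp add: integral_distr)
  also have "\<dots> = integral\<^sup>L (count_space UNIV) (\<lambda>j. pq lam j * h j)"
    unfolding N using nn by (subst integral_density) auto
  also have "\<dots> = (\<Sum>j. pq lam j * h j)" using I by (rule integral_count_space_nat)
  finally show "(\<integral>\<omega>. h (X \<omega>) \<partial>M) = (\<Sum>j. pq lam j * h j)" .
qed


definition FF :: "nat \<Rightarrow> real \<Rightarrow> real" where
  "FF m x = (\<Prod>i<m. x - real i)"

lemma FF_shift: "FF m (real (j + m)) = fact (j + m) / fact j"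
proof (induction m arbitrary: j)
  case 0 then show ?case by (simp add: FF_def)
next
  case (Suc m)
  have "FF (Suc m) (real (j + Suc m)) = FF m (real (Suc j + m)) * (real j + 1)"
    by (simp add: FF_def)
  also have "\<dots> = fact (Suc j + m) / fact (Suc j) * (real j + 1)" using Suc.IH[of "Suc j"] by (simp only:)
  also have "\<dots> = fact (j + Suc m) / fact j"
  proof -
    have e: "Suc j + m = j + Suc m" by simp
    have "(fact (Suc j) :: real) = (real j + 1) * fact j" by simp
    moreover have "(fact j :: real) \<noteq> 0" by simp
    moreover have "real j + 1 \<noteq> 0" by simp
    ultimately show ?thesis unfolding e by (simp add: divide_simps)
  qed
  finally show ?case .
qed

lemma FF_zero: "j < m \<Longrightarrow> FF m (real j) = 0"
  unfolding FF_def by (rule prod_zero) auto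

lemma FF_nonneg: "FF m (real j) \<ge> 0"
proof (cases "j < m")
  case True then show ?thesis by (simp add: FF_zero)
next
  case False then show ?thesis unfolding FF_def by (intro prod_nonneg) auto
qed

lemma FF_sums:
  assumes lam: "lam \<ge> 0"
  shows "(\<lambda>j. pq lam j * FF m (real j)) sums (lam ^ m)"
proof -
  have e: "(\<lambda>j. lam ^ j / fact j) sums exp lam"
    using exp_converges[of lam] by (simp add: field_simps)
  have "(\<lambda>j. lam ^ m * exp (- lam) * (lam ^ j / fact j)) sums (lam ^ m * exp (- lam) * exp lam)"
    by (rule sums_mult[OF e])
  moreover have "(\<lambda>j. pq lam (j + m) * FF m (real (j + m))) = (\<lambda>j. lam ^ m * exp (- lam) * (lam ^ j / fact j))"
    by (rule ext, simp only: FF_shift) (simp add: pq_def power_add field_simps)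
  moreover have "lam ^ m * exp (- lam) * exp lam = lam ^ m" by (simp add: exp_minus field_simps)
  ultimately have "(\<lambda>j. pq lam (j + m) * FF m (real (j + m))) sums (lam ^ m)"
    by simp
  then show ?thesis
    by (subst (asm) sums_zero_iff_shift) (auto simp: FF_zero)
qed

lemma FF_moment:
  assumes P: "prob_space M" and X: "poisson_rv M X lam" and lam: "lam \<ge> 0"
  shows "integrable M (\<lambda>\<omega>. FF m (real (X \<omega>)))" "(\<integral>\<omega>. FF m (real (X \<omega>)) \<partial>M) = lam ^ m"
proof -
  have S: "summable (\<lambda>j. norm (pq lam j * FF m (real j)))"
    using FF_sums[OF lam, of m] lam FF_nonneg by (simp add: sums_iff pq_def abs_mult)
  show "integrable M (\<lambda>\<omega>. FF m (real (X \<omega>)))"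
    by (rule poisson_integral(1)[OF P X lam S])
  show "(\<integral>\<omega>. FF m (real (X \<omega>)) \<partial>M) = lam ^ m"
    using poisson_integral(2)[OF P X lam S] FF_sums[OF lam, of m] by (simp add: sums_iff)
qed

lemma poly_moment:
  assumes P: "prob_space M" and X: "poisson_rv M X lam" and lam: "lam \<ge> 0"
    and eq: "\<And>x::nat. g x = c0 + c1 * FF 1 (real x) + c2 * FF 2 (real x) + c3 * FF 3 (real x) + c4 * FF 4 (real x)"
  shows "integrable M (\<lambda>\<omega>. g (X \<omega>))"
    "(\<integral>\<omega>. g (X \<omega>) \<partial>M) = c0 + c1 * lam + c2 * lam^2 + c3 * lam^3 + c4 * lam^4"
proof -
  interpret prob_space M by (rule P)
  note I = FF_moment[OF P X lam]
  have gx: "(\<lambda>\<omega>. g (X \<omega>)) = (\<lambda>\<omega>. c0 + c1 * FF 1 (real (X \<omega>)) + c2 * FF 2 (real (X \<omega>)) + c3 * FF 3 (real (X \<omega>)) + c4 * FF 4 (real (X \<omega>)))"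
    using eq by auto
  show "integrable M (\<lambda>\<omega>. g (X \<omega>))" unfolding gx
    by (intro Bochner_Integration.integrable_add integrable_mult_right I(1) integrable_const)
  show "(\<integral>\<omega>. g (X \<omega>) \<partial>M) = c0 + c1 * lam + c2 * lam^2 + c3 * lam^3 + c4 * lam^4" unfolding gx
    by (simp add: Bochner_Integration.integral_add Bochner_Integration.integrable_add integrable_mult_right I prob_space)
qed


lemma FF1: "FF 1 x = x" by (simp add: FF_def)
lemma FF2: "FF 2 x = x * (x - 1)" by (simp add: FF_def numeral_eq_Suc lessThan_Suc)
lemma FF3: "FF 3 x = x * (x - 1) * (x - 2)" by (simp add: FF_def numeral_eq_Suc lessThan_Suc)
lemma FF4: "FF 4 x = x * (x - 1) * (x - 2) * (x - 3)" by (simp add: FF_def numeral_eq_Suc lessThan_Suc)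
lemma FF1s: "FF (Suc 0) x = x" by (simp add: FF_def)
lemmas FFs = FF1 FF1s FF2 FF3 FF4

lemma single:
  assumes P: "prob_space M" and X: "poisson_rv M X lam" and lam: "lam \<ge> 0"
  shows
    "integrable M (\<lambda>\<omega>. real (X \<omega>))" "(\<integral>\<omega>. real (X \<omega>) \<partial>M) = lam"
    "integrable M (\<lambda>\<omega>. real (X \<omega>) - lam)" "(\<integral>\<omega>. real (X \<omega>) - lam \<partial>M) = 0"
    "integrable M (\<lambda>\<omega>. (real (X \<omega>) - lam)^2 - real (X \<omega>))"
    "(\<integral>\<omega>. (real (X \<omega>) - lam)^2 - real (X \<omega>) \<partial>M) = 0"
    "integrable M (\<lambda>\<omega>. (real (X \<omega>) - lam)^2)" "(\<integral>\<omega>. (real (X \<omega>) - lam)^2 \<partial>M) = lam"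
    "integrable M (\<lambda>\<omega>. ((real (X \<omega>) - lam)^2 - real (X \<omega>)) * (real (X \<omega>) - lam))"
    "(\<integral>\<omega>. ((real (X \<omega>) - lam)^2 - real (X \<omega>)) * (real (X \<omega>) - lam) \<partial>M) = 0"
    "integrable M (\<lambda>\<omega>. ((real (X \<omega>) - lam)^2 - real (X \<omega>))^2)"
    "(\<integral>\<omega>. ((real (X \<omega>) - lam)^2 - real (X \<omega>))^2 \<partial>M) = 2 * lam^2"
proof -
  note pm = poly_moment[OF P X lam]
  have e1: "\<And>x::nat. real x = 0 + 1 * FF 1 (real x) + 0 * FF 2 (real x) + 0 * FF 3 (real x) + 0 * FF 4 (real x)"
    by (simp add: FFs)
  show "integrable M (\<lambda>\<omega>. real (X \<omega>))" "(\<integral>\<omega>. real (X \<omega>) \<partial>M) = lam"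
    using pm[OF e1] by simp_all
  have e2: "\<And>x::nat. real x - lam = (- lam) + 1 * FF 1 (real x) + 0 * FF 2 (real x) + 0 * FF 3 (real x) + 0 * FF 4 (real x)"
    by (simp add: FFs)
  show "integrable M (\<lambda>\<omega>. real (X \<omega>) - lam)" "(\<integral>\<omega>. real (X \<omega>) - lam \<partial>M) = 0"
    using pm[OF e2] by simp_all
  have e3: "\<And>x::nat. (real x - lam)^2 - real x = lam^2 + (-2*lam) * FF 1 (real x) + 1 * FF 2 (real x) + 0 * FF 3 (real x) + 0 * FF 4 (real x)"
    by (simp add: FFs power2_eq_square algebra_simps)
  show "integrable M (\<lambda>\<omega>. (real (X \<omega>) - lam)^2 - real (X \<omega>))"
    "(\<integral>\<omega>. (real (X \<omega>) - lam)^2 - real (X \<omega>) \<partial>M) = 0"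
    using pm[OF e3] by (simp_all add: power2_eq_square)
  have e4: "\<And>x::nat. (real x - lam)^2 = lam^2 + (1-2*lam) * FF 1 (real x) + 1 * FF 2 (real x) + 0 * FF 3 (real x) + 0 * FF 4 (real x)"
    by (simp add: FFs power2_eq_square algebra_simps)
  show "integrable M (\<lambda>\<omega>. (real (X \<omega>) - lam)^2)" "(\<integral>\<omega>. (real (X \<omega>) - lam)^2 \<partial>M) = lam"
    using pm[OF e4] by (simp_all add: power2_eq_square algebra_simps)
  have e5: "\<And>x::nat. ((real x - lam)^2 - real x) * (real x - lam) = (- (lam^3)) + (3*lam^2 - 2*lam) * FF 1 (real x) + (2 - 3*lam) * FF 2 (real x) + 1 * FF 3 (real x) + 0 * FF 4 (real x)"
    by (simp add: FFs power2_eq_square power3_eq_cube algebra_simps)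
  show "integrable M (\<lambda>\<omega>. ((real (X \<omega>) - lam)^2 - real (X \<omega>)) * (real (X \<omega>) - lam))"
    "(\<integral>\<omega>. ((real (X \<omega>) - lam)^2 - real (X \<omega>)) * (real (X \<omega>) - lam) \<partial>M) = 0"
    using pm[OF e5] by (simp_all add: power2_eq_square power3_eq_cube algebra_simps)
  have e6: "\<And>x::nat. ((real x - lam)^2 - real x)^2 = lam^4 + (4*lam^2 - 4*lam^3) * FF 1 (real x) + (6*lam^2 - 8*lam + 2) * FF 2 (real x) + (4 - 4*lam) * FF 3 (real x) + 1 * FF 4 (real x)"
    by (simp add: FFs power2_eq_square power3_eq_cube power4_eq_xxxx algebra_simps)
  show "integrable M (\<lambda>\<omega>. ((real (X \<omega>) - lam)^2 - real (X \<omega>))^2)"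
    "(\<integral>\<omega>. ((real (X \<omega>) - lam)^2 - real (X \<omega>))^2 \<partial>M) = 2 * lam^2"
    using pm[OF e6] by (simp_all add: power2_eq_square power3_eq_cube power4_eq_xxxx algebra_simps)
qed


lemma meas2:
  assumes "s1 \<in> S" "s2 \<in> S"
  shows "(\<lambda>f. (\<Phi> (f s1) (f s2) :: real)) \<in> borel_measurable (PiM S (\<lambda>_. count_space (UNIV::nat set)))"
proof -
  have c2: "(\<lambda>f. f s2) \<in> measurable (PiM S (\<lambda>_. count_space (UNIV::nat set))) (count_space UNIV)"
    using assms(2) by (rule measurable_component_singleton)
  have c1: "(\<lambda>f. f s1) \<in> measurable (PiM S (\<lambda>_. count_space (UNIV::nat set))) (count_space UNIV)"
    using assms(1) by (rule measurable_component_singleton)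
  have "\<And>i. (\<lambda>f. \<Phi> i (f s2)) \<in> borel_measurable (PiM S (\<lambda>_. count_space (UNIV::nat set)))"
    by (rule measurable_compose_countable[OF _ c2]) simp
  then show ?thesis by (rule measurable_compose_countable[OF _ c1])
qed

lemma indep_fun2:
  fixes Y :: "'i \<Rightarrow> 'a \<Rightarrow> nat"
  assumes P: "prob_space M" and ind: "prob_space.indep_vars M (\<lambda>_. count_space UNIV) Y I"
    and ST: "S \<inter> T = {}" "S \<subseteq> I" "T \<subseteq> I"
    and s: "s1 \<in> S" "s2 \<in> S" and t: "t1 \<in> T" "t2 \<in> T"
  shows "prob_space.indep_var M borel (\<lambda>\<omega>. (\<Phi> (Y s1 \<omega>) (Y s2 \<omega>) :: real)) borel (\<lambda>\<omega>. (\<Psi> (Y t1 \<omega>) (Y t2 \<omega>) :: real))"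
proof -
  interpret prob_space M by (rule P)
  have "indep_var borel ((\<lambda>f. \<Phi> (f s1) (f s2)) \<circ> (\<lambda>\<omega>. restrict (\<lambda>i. Y i \<omega>) S))
           borel ((\<lambda>f. \<Psi> (f t1) (f t2)) \<circ> (\<lambda>\<omega>. restrict (\<lambda>i. Y i \<omega>) T))"
    by (rule indep_var_compose[OF indep_var_restrict[OF ind ST] meas2[OF s] meas2[OF t]])
  moreover have "((\<lambda>f. \<Phi> (f s1) (f s2)) \<circ> (\<lambda>\<omega>. restrict (\<lambda>i. Y i \<omega>) S)) = (\<lambda>\<omega>. \<Phi> (Y s1 \<omega>) (Y s2 \<omega>))"
    using s by (auto simp: fun_eq_iff)
  moreover have "((\<lambda>f. \<Psi> (f t1) (f t2)) \<circ> (\<lambda>\<omega>. restrict (\<lambda>i. Y i \<omega>) T)) = (\<lambda>\<omega>. \<Psi> (Y t1 \<omega>) (Y t2 \<omega>))"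
    using t by (auto simp: fun_eq_iff)
  ultimately show ?thesis by simp
qed


lemma lin3:
  fixes f1 f2 f3 :: "'a \<Rightarrow> real"
  assumes "integrable M f1" "integrable M f2" "integrable M f3"
  shows "integrable M (\<lambda>\<omega>. c1 * f1 \<omega> + c2 * f2 \<omega> + c3 * f3 \<omega>)"
    "(\<integral>\<omega>. c1 * f1 \<omega> + c2 * f2 \<omega> + c3 * f3 \<omega> \<partial>M) = c1 * integral\<^sup>L M f1 + c2 * integral\<^sup>L M f2 + c3 * integral\<^sup>L M f3"
  using assms by (simp_all add: Bochner_Integration.integral_add Bochner_Integration.integrable_add)

lemma lin6:
  fixes f1 f2 f3 f4 f5 f6 :: "'a \<Rightarrow> real"
  assumes "integrable M f1" "integrable M f2" "integrable M f3" "integrable M f4" "integrable M f5" "integrable M f6"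
  shows "integrable M (\<lambda>\<omega>. c1 * f1 \<omega> + c2 * f2 \<omega> + c3 * f3 \<omega> + c4 * f4 \<omega> + c5 * f5 \<omega> + c6 * f6 \<omega>)"
    "(\<integral>\<omega>. c1 * f1 \<omega> + c2 * f2 \<omega> + c3 * f3 \<omega> + c4 * f4 \<omega> + c5 * f5 \<omega> + c6 * f6 \<omega> \<partial>M) = c1 * integral\<^sup>L M f1 + c2 * integral\<^sup>L M f2 + c3 * integral\<^sup>L M f3 + c4 * integral\<^sup>L M f4 + c5 * integral\<^sup>L M f5 + c6 * integral\<^sup>L M f6"
  using assms by (simp_all add: Bochner_Integration.integral_add Bochner_Integration.integrable_add)

lemma fi_alt:
  assumes "n1 > 0" "n2 > 0"
  shows "fi n1 n2 (p1 - p2) x1 x2 =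
    1 / (real n1)^2 * ((x1 - real n1 * p1)^2 - x1) + 1 / (real n2)^2 * ((x2 - real n2 * p2)^2 - x2)
    + (- 2 / (real n1 * real n2)) * ((x1 - real n1 * p1) * (x2 - real n2 * p2))"
  using assms by (simp add: fi_def fstar_def field_simps power2_eq_square)

lemma sq_alt:
  fixes a b A B U V :: real
  assumes "a \<noteq> 0" "b \<noteq> 0"
  shows "(1 / a^2 * A + 1 / b^2 * B + (- 2 / (a * b)) * (U * V)) * (1 / a^2 * A + 1 / b^2 * B + (- 2 / (a * b)) * (U * V))
   = (1 / a^4) * A^2 + (1 / b^4) * B^2 + (4 / (a^2 * b^2)) * (U^2 * V^2) + (2 / (a^2 * b^2)) * (A * B)
     + (- 4 / (a^3 * b)) * ((A * U) * V) + (- 4 / (a * b^3)) * (U * (B * V))"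
  using assms by (simp add: field_simps power2_eq_square power3_eq_cube power4_eq_xxxx)


lemma mulU: "((\<alpha>::real)*A + \<beta>*B + \<kappa>*(U*V)) * U = \<alpha>*(A*U) + \<beta>*(U*B) + \<kappa>*(U^2*V)"
  by (simp add: algebra_simps power2_eq_square)
lemma mulV: "((\<alpha>::real)*A + \<beta>*B + \<kappa>*(U*V)) * V = \<alpha>*(A*V) + \<beta>*(B*V) + \<kappa>*(U*V^2)"
  by (simp add: algebra_simps power2_eq_square)

theorem lemma2:
  fixes M :: "'a measure" and n :: "nat \<Rightarrow> nat" and k :: nat
    and p :: "nat \<Rightarrow> nat \<Rightarrow> real" and X :: "nat \<Rightarrow> nat \<Rightarrow> 'a \<Rightarrow> nat"
  assumes "prob_space M"
    and "n 1 > 0" and "n 2 > 0"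
    and "\<And>c i. c \<in> {1,2} \<Longrightarrow> i \<in> {1..k} \<Longrightarrow> p c i \<ge> 0"
    and "\<And>c. c \<in> {1,2} \<Longrightarrow> (\<Sum>i=1..k. p c i) = 1"
    and "prob_space.indep_vars M (\<lambda>_. count_space UNIV) (\<lambda>(c,i). X c i) ({1,2} \<times> {1..k})"
    and "\<And>c i. c \<in> {1,2} \<Longrightarrow> i \<in> {1..k} \<Longrightarrow> poisson_rv M (X c i) (real (n c) * p c i)"
  defines "F \<equiv> \<lambda>i \<omega>. fi (n 1) (n 2) (p 1 i - p 2 i) (real (X 1 i \<omega>)) (real (X 2 i \<omega>))"
  shows "(\<forall>i\<in>{1..k}. prob_space.expectation M (F i) = 0)
    \<and> (\<forall>c\<in>{1,2}. covariance M (\<lambda>\<omega>. \<Sum>i=1..k. F i \<omega>) (\<lambda>\<omega>. \<Sum>i=1..k. real (X c i \<omega>)) = 0)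
    \<and> prob_space.variance M (\<lambda>\<omega>. \<Sum>i=1..k. F i \<omega>) = (\<Sum>i=1..k. prob_space.variance M (F i))
    \<and> (\<Sum>i=1..k. prob_space.variance M (F i))
        = 2 * (\<Sum>i=1..k. (p 1 i / real (n 1) + p 2 i / real (n 2))^2)"
proof -
  note P = assms(1)
  interpret prob_space M by (rule P)
  note ind = assms(6)
  define lam :: "nat \<Rightarrow> nat \<Rightarrow> real" where "lam = (\<lambda>c i. real (n c) * p c i)"
  define a where "a = real (n 1)"
  define b where "b = real (n 2)"
  have a0: "a > 0" "a \<noteq> 0" and b0: "b > 0" "b \<noteq> 0" using assms(2,3) by (auto simp: a_def b_def)
  have pois: "\<And>c i. c \<in> {1,2} \<Longrightarrow> i \<in> {1..k} \<Longrightarrow> poisson_rv M (X c i) (lam c i)"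
    using assms(7) by (simp add: lam_def)
  have lam0: "\<And>c i. c \<in> {1,2} \<Longrightarrow> i \<in> {1..k} \<Longrightarrow> lam c i \<ge> 0"
    using assms(4) by (simp add: lam_def)
  note S = single[OF P pois lam0]
  have within: "\<And>i \<phi> \<psi>. i \<in> {1..k} \<Longrightarrow> indep_var borel (\<lambda>\<omega>. \<phi> (X 1 i \<omega>) :: real) borel (\<lambda>\<omega>. \<psi> (X 2 i \<omega>) :: real)"
    subgoal for i \<phi> \<psi>
      using indep_fun2[OF P ind, of "{(1,i)}" "{(2,i)}" "(1,i)" "(1,i)" "(2,i)" "(2,i)" "\<lambda>x y. \<phi> x" "\<lambda>x y. \<psi> x"]
      by auto
    done
  have across: "\<And>i j c d \<Phi> \<Psi>. i \<in> {1..k} \<Longrightarrow> j \<in> {1..k} \<Longrightarrow> i \<noteq> j \<Longrightarrow> c \<in> {1,2} \<Longrightarrow> d \<in> {1,2} \<Longrightarrow>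
      indep_var borel (\<lambda>\<omega>. \<Phi> (X 1 i \<omega>) (X 2 i \<omega>) :: real) borel (\<lambda>\<omega>. \<Psi> (X c j \<omega>) (X d j \<omega>) :: real)"
    subgoal for i j c d \<Phi> \<Psi>
      using indep_fun2[OF P ind, of "{(1,i),(2,i)}" "{(1,j),(2,j)}" "(1,i)" "(2,i)" "(c,j)" "(d,j)" \<Phi> \<Psi>]
      by auto
    done
  note prod = indep_var_integrable indep_var_lebesgue_integral
  have Falt: "\<And>i \<omega>. F i \<omega> = 1 / a^2 * ((real (X 1 i \<omega>) - lam 1 i)^2 - real (X 1 i \<omega>))
     + 1 / b^2 * ((real (X 2 i \<omega>) - lam 2 i)^2 - real (X 2 i \<omega>))
     + (- 2 / (a * b)) * ((real (X 1 i \<omega>) - lam 1 i) * (real (X 2 i \<omega>) - lam 2 i))"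
    unfolding F_def a_def b_def lam_def by (rule fi_alt[OF assms(2,3)])

  have lamab: "\<And>i. lam 1 i = a * p 1 i" "\<And>i. lam 2 i = b * p 2 i" by (simp_all add: lam_def a_def b_def)
  have EF: "\<And>i. i \<in> {1..k} \<Longrightarrow> integrable M (F i) \<and> integral\<^sup>L M (F i) = 0"
  proof -
    fix i assume i: "i \<in> {1..k}"
    have p1: "poisson_rv M (X 1 i) (lam 1 i)" "lam 1 i \<ge> 0" using pois lam0 i by auto
    have p2: "poisson_rv M (X 2 i) (lam 2 i)" "lam 2 i \<ge> 0" using pois lam0 i by auto
    note S1a = single[OF P p1]
    note S2a = single[OF P p2]
    have w: "indep_var borel (\<lambda>\<omega>. real (X 1 i \<omega>) - lam 1 i) borel (\<lambda>\<omega>. real (X 2 i \<omega>) - lam 2 i)"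
      using within[OF i, of "\<lambda>x. real x - lam 1 i" "\<lambda>x. real x - lam 2 i"] by simp
    note P12 = prod[OF w S1a(3) S2a(3)]
    have Fi: "F i = (\<lambda>\<omega>. 1 / a^2 * ((real (X 1 i \<omega>) - lam 1 i)^2 - real (X 1 i \<omega>))
     + 1 / b^2 * ((real (X 2 i \<omega>) - lam 2 i)^2 - real (X 2 i \<omega>))
     + (- 2 / (a * b)) * ((real (X 1 i \<omega>) - lam 1 i) * (real (X 2 i \<omega>) - lam 2 i)))"
      by (rule ext) (rule Falt)
    note L = lin3[OF S1a(5) S2a(5) P12(1), of "1 / a^2" "1 / b^2" "- 2 / (a * b)"]
    show "integrable M (F i) \<and> integral\<^sup>L M (F i) = 0"
      unfolding Fi
    proof
      show "integrable M (\<lambda>\<omega>. 1 / a^2 * ((real (X 1 i \<omega>) - lam 1 i)^2 - real (X 1 i \<omega>))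
     + 1 / b^2 * ((real (X 2 i \<omega>) - lam 2 i)^2 - real (X 2 i \<omega>))
     + (- 2 / (a * b)) * ((real (X 1 i \<omega>) - lam 1 i) * (real (X 2 i \<omega>) - lam 2 i)))" by (rule L(1))
      show "(\<integral>\<omega>. 1 / a^2 * ((real (X 1 i \<omega>) - lam 1 i)^2 - real (X 1 i \<omega>))
     + 1 / b^2 * ((real (X 2 i \<omega>) - lam 2 i)^2 - real (X 2 i \<omega>))
     + (- 2 / (a * b)) * ((real (X 1 i \<omega>) - lam 1 i) * (real (X 2 i \<omega>) - lam 2 i)) \<partial>M) = 0"
        unfolding L(2) P12(2) S1a(4,6) S2a(4,6) by simp
    qed
  qed

  have Fu: "\<And>c i j. c \<in> {1,2} \<Longrightarrow> i \<in> {1..k} \<Longrightarrow> j \<in> {1..k} \<Longrightarrow>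
     integrable M (\<lambda>\<omega>. F i \<omega> * (real (X c j \<omega>) - lam c j)) \<and> (\<integral>\<omega>. F i \<omega> * (real (X c j \<omega>) - lam c j) \<partial>M) = 0"
  proof -
    fix c i j :: nat assume c: "c \<in> {1,2}" and i: "i \<in> {1..k}" and j: "j \<in> {1..k}"
    show "integrable M (\<lambda>\<omega>. F i \<omega> * (real (X c j \<omega>) - lam c j)) \<and> (\<integral>\<omega>. F i \<omega> * (real (X c j \<omega>) - lam c j) \<partial>M) = 0"
    proof (cases "i = j")
      case False
      have pc: "poisson_rv M (X c j) (lam c j)" "lam c j \<ge> 0" using pois lam0 c j by auto
      note Sc = single[OF P pc]
      have w: "indep_var borel (F i) borel (\<lambda>\<omega>. real (X c j \<omega>) - lam c j)"
        using across[OF i j False c c, of "\<lambda>x y. fi (n 1) (n 2) (p 1 i - p 2 i) (real x) (real y)" "\<lambda>x y. real x - lam c j"]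
        unfolding F_def by simp
      note PP = prod[OF w conjunct1[OF EF[OF i]] Sc(3)]
      show ?thesis using PP conjunct2[OF EF[OF i]] Sc(4) by simp
    next
      case True
      then have j: "j = i" by simp
      have p1: "poisson_rv M (X 1 i) (lam 1 i)" "lam 1 i \<ge> 0" using pois lam0 i by auto
      have p2: "poisson_rv M (X 2 i) (lam 2 i)" "lam 2 i \<ge> 0" using pois lam0 i by auto
      note S1a = single[OF P p1]
      note S2a = single[OF P p2]
      from c have "c = 1 \<or> c = 2" by auto
      then show ?thesis
      proof
        assume c1: "c = 1"
        have w1: "indep_var borel (\<lambda>\<omega>. real (X 1 i \<omega>) - lam 1 i) borel (\<lambda>\<omega>. (real (X 2 i \<omega>) - lam 2 i)^2 - real (X 2 i \<omega>))"
          using within[OF i, of "\<lambda>x. real x - lam 1 i" "\<lambda>x. (real x - lam 2 i)^2 - real x"] by simp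
        have w2: "indep_var borel (\<lambda>\<omega>. (real (X 1 i \<omega>) - lam 1 i)^2) borel (\<lambda>\<omega>. real (X 2 i \<omega>) - lam 2 i)"
          using within[OF i, of "\<lambda>x. (real x - lam 1 i)^2" "\<lambda>x. real x - lam 2 i"] by simp
        note Q1 = prod[OF w1 S1a(3) S2a(5)]
        note Q2 = prod[OF w2 S1a(7) S2a(3)]
        note L = lin3[OF S1a(9) Q1(1) Q2(1), of "1 / a^2" "1 / b^2" "- 2 / (a * b)"]
        have eq: "(\<lambda>\<omega>. F i \<omega> * (real (X c j \<omega>) - lam c j)) = (\<lambda>\<omega>. 1 / a^2 * (((real (X 1 i \<omega>) - lam 1 i)^2 - real (X 1 i \<omega>)) * (real (X 1 i \<omega>) - lam 1 i))
           + 1 / b^2 * ((real (X 1 i \<omega>) - lam 1 i) * ((real (X 2 i \<omega>) - lam 2 i)^2 - real (X 2 i \<omega>)))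
           + (- 2 / (a * b)) * ((real (X 1 i \<omega>) - lam 1 i)^2 * (real (X 2 i \<omega>) - lam 2 i)))"
          unfolding c1 j by (rule ext) (simp only: Falt mulU)
        show ?thesis unfolding eq using L(1) unfolding L(2) Q1(2) Q2(2) S1a(3,4,10) S2a(4,6) by simp
      next
        assume c2: "c = 2"
        have w1: "indep_var borel (\<lambda>\<omega>. (real (X 1 i \<omega>) - lam 1 i)^2 - real (X 1 i \<omega>)) borel (\<lambda>\<omega>. real (X 2 i \<omega>) - lam 2 i)"
          using within[OF i, of "\<lambda>x. (real x - lam 1 i)^2 - real x" "\<lambda>x. real x - lam 2 i"] by simp
        have w2: "indep_var borel (\<lambda>\<omega>. real (X 1 i \<omega>) - lam 1 i) borel (\<lambda>\<omega>. (real (X 2 i \<omega>) - lam 2 i)^2)"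
          using within[OF i, of "\<lambda>x. real x - lam 1 i" "\<lambda>x. (real x - lam 2 i)^2"] by simp
        note Q1 = prod[OF w1 S1a(5) S2a(3)]
        note Q2 = prod[OF w2 S1a(3) S2a(7)]
        note L = lin3[OF Q1(1) S2a(9) Q2(1), of "1 / a^2" "1 / b^2" "- 2 / (a * b)"]
        have eq: "(\<lambda>\<omega>. F i \<omega> * (real (X c j \<omega>) - lam c j)) = (\<lambda>\<omega>. 1 / a^2 * (((real (X 1 i \<omega>) - lam 1 i)^2 - real (X 1 i \<omega>)) * (real (X 2 i \<omega>) - lam 2 i))
           + 1 / b^2 * (((real (X 2 i \<omega>) - lam 2 i)^2 - real (X 2 i \<omega>)) * (real (X 2 i \<omega>) - lam 2 i))
           + (- 2 / (a * b)) * ((real (X 1 i \<omega>) - lam 1 i) * (real (X 2 i \<omega>) - lam 2 i)^2))"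
          unfolding c2 j by (rule ext) (simp only: Falt mulV)
        show ?thesis unfolding eq using L(1) unfolding L(2) Q1(2) Q2(2) S2a(3,4,10) S1a(4,6) by simp
      qed
    qed
  qed

  define V where "V = (\<lambda>i. 2 * (p 1 i / a + p 2 i / b)^2)"
  have FF: "\<And>i j. i \<in> {1..k} \<Longrightarrow> j \<in> {1..k} \<Longrightarrow>
     integrable M (\<lambda>\<omega>. F i \<omega> * F j \<omega>) \<and> (\<integral>\<omega>. F i \<omega> * F j \<omega> \<partial>M) = (if i = j then V i else 0)"
  proof -
    fix i j :: nat assume i: "i \<in> {1..k}" and j: "j \<in> {1..k}"
    show "integrable M (\<lambda>\<omega>. F i \<omega> * F j \<omega>) \<and> (\<integral>\<omega>. F i \<omega> * F j \<omega> \<partial>M) = (if i = j then V i else 0)"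
    proof (cases "i = j")
      case False
      have w: "indep_var borel (F i) borel (F j)"
        using across[OF i j False, of 1 2 "\<lambda>x y. fi (n 1) (n 2) (p 1 i - p 2 i) (real x) (real y)" "\<lambda>x y. fi (n 1) (n 2) (p 1 j - p 2 j) (real x) (real y)"]
        unfolding F_def by simp
      note PP = prod[OF w conjunct1[OF EF[OF i]] conjunct1[OF EF[OF j]]]
      show ?thesis using PP conjunct2[OF EF[OF i]] False by simp
    next
      case True
      then have j: "j = i" by simp
      have p1: "poisson_rv M (X 1 i) (lam 1 i)" "lam 1 i \<ge> 0" using pois lam0 i by auto
      have p2: "poisson_rv M (X 2 i) (lam 2 i)" "lam 2 i \<ge> 0" using pois lam0 i by auto
      note S1a = single[OF P p1]
      note S2a = single[OF P p2]
      have w1: "indep_var borel (\<lambda>\<omega>. (real (X 1 i \<omega>) - lam 1 i)^2) borel (\<lambda>\<omega>. (real (X 2 i \<omega>) - lam 2 i)^2)"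
        using within[OF i, of "\<lambda>x. (real x - lam 1 i)^2" "\<lambda>x. (real x - lam 2 i)^2"] by simp
      have w2: "indep_var borel (\<lambda>\<omega>. (real (X 1 i \<omega>) - lam 1 i)^2 - real (X 1 i \<omega>)) borel (\<lambda>\<omega>. (real (X 2 i \<omega>) - lam 2 i)^2 - real (X 2 i \<omega>))"
        using within[OF i, of "\<lambda>x. (real x - lam 1 i)^2 - real x" "\<lambda>x. (real x - lam 2 i)^2 - real x"] by simp
      have w3: "indep_var borel (\<lambda>\<omega>. ((real (X 1 i \<omega>) - lam 1 i)^2 - real (X 1 i \<omega>)) * (real (X 1 i \<omega>) - lam 1 i)) borel (\<lambda>\<omega>. real (X 2 i \<omega>) - lam 2 i)"
        using within[OF i, of "\<lambda>x. ((real x - lam 1 i)^2 - real x) * (real x - lam 1 i)" "\<lambda>x. real x - lam 2 i"] by simp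
      have w4: "indep_var borel (\<lambda>\<omega>. real (X 1 i \<omega>) - lam 1 i) borel (\<lambda>\<omega>. ((real (X 2 i \<omega>) - lam 2 i)^2 - real (X 2 i \<omega>)) * (real (X 2 i \<omega>) - lam 2 i))"
        using within[OF i, of "\<lambda>x. real x - lam 1 i" "\<lambda>x. ((real x - lam 2 i)^2 - real x) * (real x - lam 2 i)"] by simp
      note Q1 = prod[OF w1 S1a(7) S2a(7)]
      note Q2 = prod[OF w2 S1a(5) S2a(5)]
      note Q3 = prod[OF w3 S1a(9) S2a(3)]
      note Q4 = prod[OF w4 S1a(3) S2a(9)]
      note L = lin6[OF S1a(11) S2a(11) Q1(1) Q2(1) Q3(1) Q4(1), of "1 / a^4" "1 / b^4" "4 / (a^2 * b^2)" "2 / (a^2 * b^2)" "- 4 / (a^3 * b)" "- 4 / (a * b^3)"]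
      have eq: "(\<lambda>\<omega>. F i \<omega> * F j \<omega>) = (\<lambda>\<omega>. 1 / a^4 * ((real (X 1 i \<omega>) - lam 1 i)^2 - real (X 1 i \<omega>))^2
         + 1 / b^4 * ((real (X 2 i \<omega>) - lam 2 i)^2 - real (X 2 i \<omega>))^2
         + 4 / (a^2 * b^2) * ((real (X 1 i \<omega>) - lam 1 i)^2 * (real (X 2 i \<omega>) - lam 2 i)^2)
         + 2 / (a^2 * b^2) * (((real (X 1 i \<omega>) - lam 1 i)^2 - real (X 1 i \<omega>)) * ((real (X 2 i \<omega>) - lam 2 i)^2 - real (X 2 i \<omega>)))
         + (- 4 / (a^3 * b)) * ((((real (X 1 i \<omega>) - lam 1 i)^2 - real (X 1 i \<omega>)) * (real (X 1 i \<omega>) - lam 1 i)) * (real (X 2 i \<omega>) - lam 2 i))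
         + (- 4 / (a * b^3)) * ((real (X 1 i \<omega>) - lam 1 i) * (((real (X 2 i \<omega>) - lam 2 i)^2 - real (X 2 i \<omega>)) * (real (X 2 i \<omega>) - lam 2 i))))"
        unfolding j by (rule ext) (simp only: Falt sq_alt[OF a0(2) b0(2)])
      have val: "1 / a^4 * (2 * (lam 1 i)^2) + 1 / b^4 * (2 * (lam 2 i)^2) + 4 / (a^2 * b^2) * (lam 1 i * lam 2 i) = V i"
        unfolding V_def lamab using a0 b0 by (simp add: field_simps power2_eq_square power3_eq_cube power4_eq_xxxx)
      show ?thesis unfolding eq using L(1) unfolding L(2) Q1(2) Q2(2) Q3(2) Q4(2) S1a(4,6,8,10,12) S2a(4,6,8,10,12)
        using val j by simp
    qed
  qed
  have Xint: "\<And>c i. c \<in> {1,2} \<Longrightarrow> i \<in> {1..k} \<Longrightarrow> integrable M (\<lambda>\<omega>. real (X c i \<omega>)) \<and> (\<integral>\<omega>. real (X c i \<omega>) \<partial>M) = lam c i"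
    using single(1,2)[OF P pois lam0] by blast
  have EsF: "(\<integral>\<omega>. (\<Sum>i=1..k. F i \<omega>) \<partial>M) = 0"
    using EF by (subst Bochner_Integration.integral_sum) auto
  have cov: "\<And>c. c \<in> {1,2} \<Longrightarrow> covariance M (\<lambda>\<omega>. \<Sum>i=1..k. F i \<omega>) (\<lambda>\<omega>. \<Sum>i=1..k. real (X c i \<omega>)) = 0"
  proof -
    fix c :: nat assume c: "c \<in> {1,2}"
    have EsX: "(\<integral>\<omega>. (\<Sum>i=1..k. real (X c i \<omega>)) \<partial>M) = (\<Sum>i=1..k. lam c i)"
      using Xint[OF c] by (subst Bochner_Integration.integral_sum) auto
    have eq: "(\<lambda>\<omega>. ((\<Sum>i=1..k. F i \<omega>) - 0) * ((\<Sum>i=1..k. real (X c i \<omega>)) - (\<Sum>i=1..k. lam c i)))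
       = (\<lambda>\<omega>. \<Sum>i\<in>{1..k}. \<Sum>j\<in>{1..k}. F i \<omega> * (real (X c j \<omega>) - lam c j))"
      by (auto simp: fun_eq_iff sum_subtractf[symmetric] sum_product)
    have "covariance M (\<lambda>\<omega>. \<Sum>i=1..k. F i \<omega>) (\<lambda>\<omega>. \<Sum>i=1..k. real (X c i \<omega>))
       = (\<integral>\<omega>. (\<Sum>i\<in>{1..k}. \<Sum>j\<in>{1..k}. F i \<omega> * (real (X c j \<omega>) - lam c j)) \<partial>M)"
      unfolding covariance_def EsF EsX eq ..
    also have "\<dots> = (\<Sum>i\<in>{1..k}. \<Sum>j\<in>{1..k}. (\<integral>\<omega>. F i \<omega> * (real (X c j \<omega>) - lam c j) \<partial>M))"
    proof -
      have "\<And>i. i \<in> {1..k} \<Longrightarrow> integrable M (\<lambda>\<omega>. \<Sum>j\<in>{1..k}. F i \<omega> * (real (X c j \<omega>) - lam c j))"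
        using Fu[OF c] by (intro Bochner_Integration.integrable_sum) auto
      then have "(\<integral>\<omega>. (\<Sum>i\<in>{1..k}. \<Sum>j\<in>{1..k}. F i \<omega> * (real (X c j \<omega>) - lam c j)) \<partial>M)
         = (\<Sum>i\<in>{1..k}. (\<integral>\<omega>. (\<Sum>j\<in>{1..k}. F i \<omega> * (real (X c j \<omega>) - lam c j)) \<partial>M))"
        by (rule Bochner_Integration.integral_sum)
      also have "\<dots> = (\<Sum>i\<in>{1..k}. \<Sum>j\<in>{1..k}. (\<integral>\<omega>. F i \<omega> * (real (X c j \<omega>) - lam c j) \<partial>M))"
        using Fu[OF c] by (intro sum.cong refl Bochner_Integration.integral_sum) auto
      finally show ?thesis .
    qed
    also have "\<dots> = 0" using Fu[OF c] by simp
    finally show "covariance M (\<lambda>\<omega>. \<Sum>i=1..k. F i \<omega>) (\<lambda>\<omega>. \<Sum>i=1..k. real (X c i \<omega>)) = 0" .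
  qed
  have varS: "variance (\<lambda>\<omega>. \<Sum>i=1..k. F i \<omega>) = (\<Sum>i=1..k. V i)"
  proof -
    have eq: "(\<lambda>\<omega>. ((\<Sum>i=1..k. F i \<omega>) - 0)^2) = (\<lambda>\<omega>. \<Sum>i\<in>{1..k}. \<Sum>j\<in>{1..k}. F i \<omega> * F j \<omega>)"
      by (auto simp: fun_eq_iff power2_eq_square sum_product)
    have "variance (\<lambda>\<omega>. \<Sum>i=1..k. F i \<omega>) = (\<integral>\<omega>. (\<Sum>i\<in>{1..k}. \<Sum>j\<in>{1..k}. F i \<omega> * F j \<omega>) \<partial>M)"
      unfolding EsF eq ..
    also have "\<dots> = (\<Sum>i\<in>{1..k}. \<Sum>j\<in>{1..k}. (\<integral>\<omega>. F i \<omega> * F j \<omega> \<partial>M))"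
    proof -
      have "\<And>i. i \<in> {1..k} \<Longrightarrow> integrable M (\<lambda>\<omega>. \<Sum>j\<in>{1..k}. F i \<omega> * F j \<omega>)"
        using FF by (intro Bochner_Integration.integrable_sum) auto
      then have "(\<integral>\<omega>. (\<Sum>i\<in>{1..k}. \<Sum>j\<in>{1..k}. F i \<omega> * F j \<omega>) \<partial>M)
         = (\<Sum>i\<in>{1..k}. (\<integral>\<omega>. (\<Sum>j\<in>{1..k}. F i \<omega> * F j \<omega>) \<partial>M))"
        by (rule Bochner_Integration.integral_sum)
      also have "\<dots> = (\<Sum>i\<in>{1..k}. \<Sum>j\<in>{1..k}. (\<integral>\<omega>. F i \<omega> * F j \<omega> \<partial>M))"
        using FF by (intro sum.cong refl Bochner_Integration.integral_sum) auto
      finally show ?thesis .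
    qed
    also have "\<dots> = (\<Sum>i\<in>{1..k}. \<Sum>j\<in>{1..k}. (if i = j then V i else 0))"
      using FF by (intro sum.cong refl) simp
    also have "\<dots> = (\<Sum>i=1..k. V i)" by simp
    finally show ?thesis .
  qed
  have varF: "\<And>i. i \<in> {1..k} \<Longrightarrow> variance (F i) = V i"
  proof -
    fix i :: nat assume i: "i \<in> {1..k}"
    have "variance (F i) = (\<integral>\<omega>. F i \<omega> * F i \<omega> \<partial>M)"
      using conjunct2[OF EF[OF i]] by (simp add: power2_eq_square)
    then show "variance (F i) = V i" using FF[OF i i] by simp
  qed
  have sumV: "(\<Sum>i=1..k. variance (F i)) = (\<Sum>i=1..k. V i)"
    using varF by (intro sum.cong) auto
  show ?thesis
  proof (intro conjI)
    show "\<forall>i\<in>{1..k}. expectation (F i) = 0" using EF by blast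
    show "\<forall>c\<in>{1,2}. covariance M (\<lambda>\<omega>. \<Sum>i=1..k. F i \<omega>) (\<lambda>\<omega>. \<Sum>i=1..k. real (X c i \<omega>)) = 0"
      using cov by blast
    show "variance (\<lambda>\<omega>. \<Sum>i=1..k. F i \<omega>) = (\<Sum>i=1..k. variance (F i))" using varS sumV by simp
    show "(\<Sum>i=1..k. variance (F i)) = 2 * (\<Sum>i=1..k. (p 1 i / real (n 1) + p 2 i / real (n 2))^2)"
      unfolding sumV V_def a_def b_def by (simp add: sum_distrib_left)
  qed
qed

end
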